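(* Let $m\mathcal{M}$ be the maximal matching feature. Then for every weighted graph $(G,f)$ one has $\sigma^{m\mathcal{M}}_{(G,f)}=\varrho^{m\mathcal{M}}_{(G,f)}$, and the generator $\sigma^{m\mathcal{M}}=\varrho^{m\mathcal{M}}$ is balanced: for every graph $G=(V,E)$, every two filtering functions $f,g:E\to\mathbb{R}$ and every $h>0$ with $\sup_{e\in E}|f(e)-g(e)|\le h$, $\sigma^{m\mathcal{M}}_{(G,f)}(u-h,v+h)\le\sigma^{m\mathcal{M}}_{(G,g)}(u,v)$ for all $(u,v)\in\Delta^+$.
   Context: Graphs are finite simple undirected graphs; a weighted graph is $(G,f)$ with $G=(V,E)$, $f:E\to\mathbb{R}$. For $u\in\mathbb{R}$, $G_u=(V_u,E_u)$ is the subgraph induced by the edge set $f^{-1}((-\infty,u])$ (vertices: endpoints of these edges), $G_{+\infty}=G$. $\Delta^+=\{(u,v)\in\mathbb{R}\times(\mathbb{R}\cup\{+\infty\}):u<v\}$, with $+\infty+h=+\infty$. A feature assigns to every graph $H=(V_H,E_H)$ a function $2^{V_H\cup E_H}\to\{true,false\}$. The matching feature $\mathcal{M}$ is true on $X$ iff $X$ is a set of edges of $H$ no two of which share a vertex. The maximal feature $m\mathcal{F}$ of a feature $\mathcal{F}$ is: $m\mathcal{F}(X)=true$ in $H$ iff $\mathcal{F}(X)=true$ in $H$ and there is no $Y\subseteq V_H\cup E_H$ with $X\subsetneq Y$ and $\mathcal{F}(Y)=true$. Thus $m\mathcal{M}$ is true exactly on maximal matchings. For a feature $\mathcal{F}$: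 $X\subseteq V\cup E$ is an $\mathcal{F}$-set at level $w$ if $X\subseteq V_w\cup E_w$ and $\mathcal{F}(X)=true$ in $G_w$; a steady $\mathcal{F}$-set at $(u,v)\in\Delta^+$ if it is an $\mathcal{F}$-set at all levels $w\in[u,v]$; a ranging $\mathcal{F}$-set at $(u,v)$ if it is an $\mathcal{F}$-set at some level $w\le u$ and at some level $w'\ge v$. $\sigma^{\mathcal{F}}_{(G,f)}(u,v)$ and $\varrho^{\mathcal{F}}_{(G,f)}(u,v)$ are the numbers of steady, resp. ranging, $\mathcal{F}$-sets at $(u,v)$. *)

theory Defs
  imports Complex_Main "HOL-Library.Extended_Real"
begin

datatype 'a gitem = Vx 'a | Ed "'a set"

definition simple_graph :: "'a set \<Rightarrow> 'a set set \<Rightarrow> bool" where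
  "simple_graph V E \<longleftrightarrow> finite V \<and> (\<forall>e\<in>E. \<exists>x y. x \<noteq> y \<and> x \<in> V \<and> y \<in> V \<and> e = {x, y})"

definition items :: "'a set \<Rightarrow> 'a set set \<Rightarrow> 'a gitem set" where
  "items V E = Vx ` V \<union> Ed ` E"

type_synonym 'a feature = "'a set \<Rightarrow> 'a set set \<Rightarrow> 'a gitem set \<Rightarrow> bool"

definition matching_feature :: "'a feature" where
  "matching_feature V E X \<longleftrightarrow> X \<subseteq> Ed ` E \<and>
     (\<forall>e1 e2. Ed e1 \<in> X \<longrightarrow> Ed e2 \<in> X \<longrightarrow> e1 \<noteq> e2 \<longrightarrow> e1 \<inter> e2 = {})"

definition maximal_feature :: "'a feature \<Rightarrow> 'a feature" where
  "maximal_feature F V E X \<longleftrightarrow> F V E X \<and>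
     \<not> (\<exists>Y. Y \<subseteq> items V E \<and> X \<subset> Y \<and> F V E Y)"

text \<open>Sublevel graph G_w for a level w in \<real> \<union> {+\<infinity>} (represented as ereal, w \<noteq> -\<infinity>).\<close>
definition sub_E :: "'a set set \<Rightarrow> ('a set \<Rightarrow> real) \<Rightarrow> ereal \<Rightarrow> 'a set set" where
  "sub_E E f w = (if w = \<infinity> then E else {e \<in> E. ereal (f e) \<le> w})"

definition sub_V :: "'a set \<Rightarrow> 'a set set \<Rightarrow> ('a set \<Rightarrow> real) \<Rightarrow> ereal \<Rightarrow> 'a set" where
  "sub_V V E f w = (if w = \<infinity> then V else \<Union> (sub_E E f w))"

definition is_F_set_at ::
  "'a feature \<Rightarrow> 'a set \<Rightarrow> 'a set set \<Rightarrow> ('a set \<Rightarrow> real) \<Rightarrow> ereal \<Rightarrow> 'a gitem set \<Rightarrow> bool" where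
  "is_F_set_at F V E f w X \<longleftrightarrow>
     X \<subseteq> items (sub_V V E f w) (sub_E E f w) \<and> F (sub_V V E f w) (sub_E E f w) X"

definition steady_F_set ::
  "'a feature \<Rightarrow> 'a set \<Rightarrow> 'a set set \<Rightarrow> ('a set \<Rightarrow> real) \<Rightarrow> real \<Rightarrow> ereal \<Rightarrow> 'a gitem set \<Rightarrow> bool" where
  "steady_F_set F V E f u v X \<longleftrightarrow> (\<forall>w. ereal u \<le> w \<and> w \<le> v \<longrightarrow> is_F_set_at F V E f w X)"

definition ranging_F_set ::
  "'a feature \<Rightarrow> 'a set \<Rightarrow> 'a set set \<Rightarrow> ('a set \<Rightarrow> real) \<Rightarrow> real \<Rightarrow> ereal \<Rightarrow> 'a gitem set \<Rightarrow> bool" where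
  "ranging_F_set F V E f u v X \<longleftrightarrow>
     (\<exists>w::real. w \<le> u \<and> is_F_set_at F V E f (ereal w) X) \<and>
     (\<exists>w'. v \<le> w' \<and> is_F_set_at F V E f w' X)"

definition steady_count ::
  "'a feature \<Rightarrow> 'a set \<Rightarrow> 'a set set \<Rightarrow> ('a set \<Rightarrow> real) \<Rightarrow> real \<Rightarrow> ereal \<Rightarrow> nat" where
  "steady_count F V E f u v = card {X. X \<subseteq> items V E \<and> steady_F_set F V E f u v X}"

definition ranging_count ::
  "'a feature \<Rightarrow> 'a set \<Rightarrow> 'a set set \<Rightarrow> ('a set \<Rightarrow> real) \<Rightarrow> real \<Rightarrow> ereal \<Rightarrow> nat" where
  "ranging_count F V E f u v = card {X. X \<subseteq> items V E \<and> ranging_F_set F V E f u v X}"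

end

theory Submission
  imports Defs
begin

definition mm :: "'a set set \<Rightarrow> 'a gitem set \<Rightarrow> bool" where
  "mm E' X \<longleftrightarrow> X \<subseteq> Ed ` E' \<and>
     (\<forall>e1 e2. Ed e1 \<in> X \<longrightarrow> Ed e2 \<in> X \<longrightarrow> e1 \<noteq> e2 \<longrightarrow> e1 \<inter> e2 = {}) \<and>
     (\<forall>e\<in>E'. Ed e \<notin> X \<longrightarrow> (\<exists>e'. Ed e' \<in> X \<and> e \<inter> e' \<noteq> {}))"

lemma maxf_mm: "maximal_feature matching_feature V' E' X \<longleftrightarrow> mm E' X"
proof
  assume a: "maximal_feature matching_feature V' E' X"
  hence m: "matching_feature V' E' X" and nY: "\<not> (\<exists>Y. Y \<subseteq> items V' E' \<and> X \<subset> Y \<and> matching_feature V' E' Y)"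
    unfolding maximal_feature_def by auto
  show "mm E' X" unfolding mm_def
  proof (intro conjI ballI impI)
    show "X \<subseteq> Ed ` E'" using m unfolding matching_feature_def by auto
    show "\<forall>e1 e2. Ed e1 \<in> X \<longrightarrow> Ed e2 \<in> X \<longrightarrow> e1 \<noteq> e2 \<longrightarrow> e1 \<inter> e2 = {}"
      using m unfolding matching_feature_def by auto
  next
    fix e assume e: "e \<in> E'" "Ed e \<notin> X"
    show "\<exists>e'. Ed e' \<in> X \<and> e \<inter> e' \<noteq> {}"
    proof (rule ccontr)
      assume c: "\<not> ?thesis"
      have "insert (Ed e) X \<subseteq> items V' E'" using m e unfolding matching_feature_def items_def by auto
      moreover have "X \<subset> insert (Ed e) X" using e by auto
      moreover have "matching_feature V' E' (insert (Ed e) X)"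
        using m e c unfolding matching_feature_def by (auto simp: Int_commute)
      ultimately show False using nY by blast
    qed
  qed
next
  assume a: "mm E' X"
  show "maximal_feature matching_feature V' E' X"
    unfolding maximal_feature_def
  proof (intro conjI notI)
    show "matching_feature V' E' X" using a unfolding mm_def matching_feature_def by auto
  next
    assume "\<exists>Y. Y \<subseteq> items V' E' \<and> X \<subset> Y \<and> matching_feature V' E' Y"
    then obtain Y where Y: "X \<subset> Y" "matching_feature V' E' Y" by blast
    then obtain y where y: "y \<in> Y" "y \<notin> X" by blast
    then obtain e where e: "y = Ed e" "e \<in> E'" using Y unfolding matching_feature_def by auto
    have a3: "\<forall>e\<in>E'. Ed e \<notin> X \<longrightarrow> (\<exists>e'. Ed e' \<in> X \<and> e \<inter> e' \<noteq> {})"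
      using a unfolding mm_def by (elim conjE)
    have "Ed e \<notin> X" using y e by simp
    then obtain e' where e': "Ed e' \<in> X" "e \<inter> e' \<noteq> {}" using a3 e(2) by blast
    have "e \<noteq> e'" using e' y e by auto
    thus False using Y e' y e unfolding matching_feature_def by blast
  qed
qed

lemma isF_mm: "is_F_set_at (maximal_feature matching_feature) V E f w X \<longleftrightarrow> mm (sub_E E f w) X"
  unfolding is_F_set_at_def maxf_mm by (auto simp: mm_def items_def)

lemma mm_between: "E1 \<subseteq> E2 \<Longrightarrow> E2 \<subseteq> E3 \<Longrightarrow> mm E1 X \<Longrightarrow> mm E3 X \<Longrightarrow> mm E2 X"
proof -
  assume a: "E1 \<subseteq> E2" "E2 \<subseteq> E3" "mm E1 X" "mm E3 X"
  have X1: "X \<subseteq> Ed ` E2" using a(1,3) unfolding mm_def by (meson image_mono order_trans)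
  have m: "\<forall>e1 e2. Ed e1 \<in> X \<longrightarrow> Ed e2 \<in> X \<longrightarrow> e1 \<noteq> e2 \<longrightarrow> e1 \<inter> e2 = {}"
    using a(3) unfolding mm_def by (elim conjE)
  have X2: "\<forall>e\<in>E2. Ed e \<notin> X \<longrightarrow> (\<exists>e'. Ed e' \<in> X \<and> e \<inter> e' \<noteq> {})"
    using a(2,4) unfolding mm_def by (meson subsetD)
  show ?thesis using X1 m X2 unfolding mm_def by (intro conjI)
qed

lemma subE_mono: "w \<le> w' \<Longrightarrow> sub_E E f w \<subseteq> sub_E E f w'"
proof -
  assume w: "w \<le> w'"
  show ?thesis
  proof (cases "w' = \<infinity>")
    case True thus ?thesis unfolding sub_E_def by auto
  next
    case False
    hence "w \<noteq> \<infinity>" using w by auto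
    thus ?thesis using False w unfolding sub_E_def by (auto dest: order_trans)
  qed
qed

lemma subE_sub: "sub_E E f w \<subseteq> E"
  unfolding sub_E_def by auto

lemma fin_items: "simple_graph V E \<Longrightarrow> finite (items V E)"
proof -
  assume s: "simple_graph V E"
  hence fV: "finite V" and "E \<subseteq> Pow V" unfolding simple_graph_def by auto
  hence "finite E" by (meson finite_Pow_iff rev_finite_subset)
  thus ?thesis using fV unfolding items_def by auto
qed

theorem proposition5:
  shows "(\<forall>(V::'a set) E f u v. simple_graph V E \<longrightarrow> ereal u < v \<longrightarrow>
            steady_count (maximal_feature matching_feature) V E f u v
          = ranging_count (maximal_feature matching_feature) V E f u v)
       \<and> (\<forall>(V::'a set) E f g (h::real) u v. simple_graph V E \<longrightarrow> h > 0 \<longrightarrow>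
            (\<forall>e\<in>E. \<bar>f e - g e\<bar> \<le> h) \<longrightarrow> ereal u < v \<longrightarrow>
            steady_count (maximal_feature matching_feature) V E f (u - h) (v + ereal h)
          \<le> steady_count (maximal_feature matching_feature) V E g u v)"
proof (intro conjI allI impI)
  fix V :: "'a set" and E f u v
  assume s: "simple_graph V E" and uv: "ereal u < v"
  have "\<And>X. steady_F_set (maximal_feature matching_feature) V E f u v X
      \<longleftrightarrow> ranging_F_set (maximal_feature matching_feature) V E f u v X"
  proof
    fix X assume "steady_F_set (maximal_feature matching_feature) V E f u v X"
    thus "ranging_F_set (maximal_feature matching_feature) V E f u v X"
      unfolding steady_F_set_def ranging_F_set_def using uv
      by (metis order.refl order_less_imp_le[OF uv])
  next
    fix X assume "ranging_F_set (maximal_feature matching_feature) V E f u v X"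
    then obtain w w' where w: "w \<le> u" "mm (sub_E E f (ereal w)) X"
      and w': "v \<le> w'" "mm (sub_E E f w') X"
      unfolding ranging_F_set_def isF_mm by blast
    show "steady_F_set (maximal_feature matching_feature) V E f u v X"
      unfolding steady_F_set_def isF_mm
    proof (intro allI impI)
      fix z assume z: "ereal u \<le> z \<and> z \<le> v"
      show "mm (sub_E E f z) X"
      proof (rule mm_between[OF _ _ w(2) w'(2)])
        show "sub_E E f (ereal w) \<subseteq> sub_E E f z" using z w(1)
          by (intro subE_mono) (meson ereal_less_eq(3) order_trans)
        show "sub_E E f z \<subseteq> sub_E E f w'" using z w'(1)
          by (intro subE_mono) (meson order_trans)
      qed
    qed
  qed
  thus "steady_count (maximal_feature matching_feature) V E f u v
          = ranging_count (maximal_feature matching_feature) V E f u v"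
    unfolding steady_count_def ranging_count_def by simp
next
  fix V :: "'a set" and E f g and h :: real and u v
  assume s: "simple_graph V E" and h: "h > 0" and fg: "\<forall>e\<in>E. \<bar>f e - g e\<bar> \<le> h"
    and uv: "ereal u < v"
  have sub: "{X. X \<subseteq> items V E \<and> steady_F_set (maximal_feature matching_feature) V E f (u - h) (v + ereal h) X}
     \<subseteq> {X. X \<subseteq> items V E \<and> steady_F_set (maximal_feature matching_feature) V E g u v X}"
  proof safe
    fix X assume st: "steady_F_set (maximal_feature matching_feature) V E f (u - h) (v + ereal h) X"
    have le1: "ereal (u - h) \<le> v + ereal h"
    proof (cases v)
      case (real r) thus ?thesis using uv h by simp
    qed (use uv in auto)
    have st': "\<forall>w. ereal (u - h) \<le> w \<and> w \<le> v + ereal h \<longrightarrow> mm (sub_E E f w) X"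
      using st unfolding steady_F_set_def isF_mm .
    have A: "mm (sub_E E f (ereal (u - h))) X" using st'[rule_format, of "ereal (u - h)"] le1 by simp
    have B: "mm (sub_E E f (v + ereal h)) X" using st'[rule_format, of "v + ereal h"] le1 by simp
    show "steady_F_set (maximal_feature matching_feature) V E g u v X"
      unfolding steady_F_set_def isF_mm
    proof (intro allI impI)
      fix z assume z: "ereal u \<le> z \<and> z \<le> v"
      show "mm (sub_E E g z) X"
      proof (rule mm_between[OF _ _ A B])
        show "sub_E E f (ereal (u - h)) \<subseteq> sub_E E g z"
        proof (cases "z = \<infinity>")
          case True thus ?thesis using subE_sub by (simp add: sub_E_def)
        next
          case False
          show ?thesis
          proof
            fix e assume "e \<in> sub_E E f (ereal (u - h))"
            hence e: "e \<in> E" "f e \<le> u - h" unfolding sub_E_def by auto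
            moreover have "\<bar>f e - g e\<bar> \<le> h" using fg e(1) by blast
            ultimately have "g e \<le> u" by linarith
            hence "ereal (g e) \<le> z" using z by (meson ereal_less_eq(3) order_trans)
            thus "e \<in> sub_E E g z" using e False unfolding sub_E_def by auto
          qed
        qed
        show "sub_E E g z \<subseteq> sub_E E f (v + ereal h)"
        proof (cases v)
          case (real r)
          then obtain s where zs: "z = ereal s" "u \<le> s" "s \<le> r" using z
            by (cases z) auto
          show ?thesis
          proof
            fix e assume "e \<in> sub_E E g z"
            hence e: "e \<in> E" "g e \<le> s" unfolding sub_E_def zs by auto
            moreover have "\<bar>f e - g e\<bar> \<le> h" using fg e(1) by blast
            ultimately have "f e \<le> r + h" using zs by linarith
            thus "e \<in> sub_E E f (v + ereal h)" using e real unfolding sub_E_def by auto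
          qed
        qed (use uv subE_sub in \<open>auto simp: sub_E_def\<close>)
      qed
    qed
  qed
  show "steady_count (maximal_feature matching_feature) V E f (u - h) (v + ereal h)
          \<le> steady_count (maximal_feature matching_feature) V E g u v"
    unfolding steady_count_def
    by (rule card_mono[OF _ sub]) (rule finite_subset[OF _ finite_Pow_iff[THEN iffD2, OF fin_items[OF s]]], auto)
qed

end
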